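(* Consider a neutral evolutionary model on $N$ sites given by a replacement rule $p$ satisfying the fixation assumption described in the context, with replacement probabilities $e_{ij}$, death rates $d_i$, total birth rate $B>0$, site-specific fixation probabilities $\rho_i$, overall fixation probability $\rho=\frac{1}{B}\sum_{i=1}^N d_i\rho_i$ and molecular clock rate $K=Nu\rho$ (for a mutation probability $u>0$ per reproduction). If the death rates $d_i$ are constant over all sites $i=1,\ldots,N$, then $\rho=1/N$, and consequently $K=u$.
   Context: There are $N$ sites $1,\ldots,N$, each always occupied by one individual of type M (mutant) or R (resident); a state is $\mathbf{s}=(s_1,\ldots,s_N)\in\{\mathrm{M},\mathrm{R}\}^N$. A replacement event is a pair $(R,\alpha)$ with $R\subseteq\{1,\ldots,N\}$ and $\alpha:R\to\{1,\ldots,N\}$ (the occupant of each $j\in R$ is replaced by an offspring of the occupant of $\alpha(j)$). A replacement rule is a probability distribution $p(R,\alpha)$ on replacement events, independent of the state. The evolutionary Markov chain: at each time-step an event $(R,\alpha)$ is drawn with probability $p(R,\alpha)$ and the new state is $s_i'=s_i$ if $i\notin R$, $s_i'=s_{\alpha(i)}$ if $i\in R$. Fixation assumption: there exist a site $i$ and a finite sequence of replacement events, each of positive probability, such that if these events occur consecutively (from any initial state) every site ends up carrying the type initially at site $i$. Define $e_{ij}=\sum_{(R,\alpha):\, j\in R,\ \alpha(j)=i}p(R,\alpha)$, $b_i=\sum_j e_{ij}$ (birth rate), $d_i=\sum_j e_{ji}$ (death rate), $B=\sum_{i,j}e_{ij}$. The site-specific fixation probability $\rho_i$ is the probability that the chain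 started from the state with M at site $i$ and R elsewhere is eventually absorbed in $(\mathrm{M},\ldots,\mathrm{M})$. *)

theory Defs
  imports "HOL-Probability.Probability"
begin

datatype ty = Mut | Res

text \<open>Sites are 1..N. A state is a function from sites to types (values outside
  the sites are irrelevant and never changed). A replacement event is a pair
  (R, alpha); alpha is only meaningful on R.\<close>

type_synonym event = "nat set \<times> (nat \<Rightarrow> nat)"
type_synonym state = "nat \<Rightarrow> ty"

definition sites :: "nat \<Rightarrow> nat set" where
  "sites N = {1..N}"

definition valid_event :: "nat \<Rightarrow> event \<Rightarrow> bool" where
  "valid_event N evt \<longleftrightarrow> fst evt \<subseteq> sites N \<and> (\<forall>j\<in>fst evt. snd evt j \<in> sites N)"

definition apply_event :: "event \<Rightarrow> state \<Rightarrow> state" where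
  "apply_event evt s = (\<lambda>i. if i \<in> fst evt then s (snd evt i) else s i)"

definition replacement_rule :: "nat \<Rightarrow> event pmf \<Rightarrow> bool" where
  "replacement_rule N p \<longleftrightarrow> (\<forall>evt \<in> set_pmf p. valid_event N evt)"

definition fixation_assumption :: "nat \<Rightarrow> event pmf \<Rightarrow> bool" where
  "fixation_assumption N p \<longleftrightarrow>
     (\<exists>i\<in>sites N. \<exists>evs :: event list. (\<forall>evt\<in>set evs. pmf p evt > 0) \<and>
        (\<forall>s :: state. \<forall>j\<in>sites N. fold apply_event evs s j = s i))"

definition chain_step :: "event pmf \<Rightarrow> state \<Rightarrow> state pmf" where
  "chain_step p s = map_pmf (\<lambda>evt. apply_event evt s) p"

primrec dist_after :: "event pmf \<Rightarrow> nat \<Rightarrow> state \<Rightarrow> state pmf" where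
  "dist_after p 0 s = return_pmf s"
| "dist_after p (Suc n) s = bind_pmf (dist_after p n s) (chain_step p)"

definition all_mutant :: "nat \<Rightarrow> state set" where
  "all_mutant N = {s. \<forall>j\<in>sites N. s j = Mut}"

definition single_mutant :: "nat \<Rightarrow> state" where
  "single_mutant i = (\<lambda>j. if j = i then Mut else Res)"

text \<open>Site-specific fixation probability: probability of eventual absorption in the
  all-mutant state. Since that state is absorbing, this is the limit of the
  probability of being in it at time n.\<close>
definition fix_prob :: "nat \<Rightarrow> event pmf \<Rightarrow> nat \<Rightarrow> real" where
  "fix_prob N p i = lim (\<lambda>n. measure_pmf.prob (dist_after p n (single_mutant i)) (all_mutant N))"

definition e_rate :: "event pmf \<Rightarrow> nat \<Rightarrow> nat \<Rightarrow> real" where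
  "e_rate p i j = measure_pmf.prob p {evt. j \<in> fst evt \<and> snd evt j = i}"

definition birth_rate :: "nat \<Rightarrow> event pmf \<Rightarrow> nat \<Rightarrow> real" where
  "birth_rate N p i = (\<Sum>j\<in>sites N. e_rate p i j)"

definition death_rate :: "nat \<Rightarrow> event pmf \<Rightarrow> nat \<Rightarrow> real" where
  "death_rate N p i = (\<Sum>j\<in>sites N. e_rate p j i)"

definition total_birth :: "nat \<Rightarrow> event pmf \<Rightarrow> real" where
  "total_birth N p = (\<Sum>i\<in>sites N. \<Sum>j\<in>sites N. e_rate p i j)"

definition overall_fix_prob :: "nat \<Rightarrow> event pmf \<Rightarrow> real" where
  "overall_fix_prob N p = (1 / total_birth N p) * (\<Sum>i\<in>sites N. death_rate N p i * fix_prob N p i)"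

definition molecular_clock :: "nat \<Rightarrow> event pmf \<Rightarrow> real \<Rightarrow> real" where
  "molecular_clock N p u = real N * u * overall_fix_prob N p"

end

theory Submission
  imports Defs
begin
lemma prob_bind: "measure_pmf.prob (bind_pmf M K) X = (\<integral>x. measure_pmf.prob (K x) X \<partial>M)"
  unfolding measure_pmf_bind
  by (rule measure_pmf.measure_bind[where N="count_space UNIV"]) (auto simp: measure_pmf_in_subprob_algebra)

lemma integrable_prob: "integrable (measure_pmf M) (\<lambda>x. measure_pmf.prob (K x) X * c)"
  by (rule measure_pmf.integrable_const_bound[where B="\<bar>c\<bar>"]) (auto simp: abs_mult intro!: mult_left_le_one_le)

lemma integrable_ind: "integrable (measure_pmf M) (\<lambda>x. indicator Y x * (c::real))"
  by (rule measure_pmf.integrable_const_bound[where B="\<bar>c\<bar>"]) (auto simp: indicator_def)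

lemma bind_lower:
  assumes "\<And>x. x \<in> Y \<Longrightarrow> measure_pmf.prob (K x) X \<ge> c" "c \<ge> 0"
  shows "measure_pmf.prob (bind_pmf M K) X \<ge> measure_pmf.prob M Y * c"
proof -
  have "measure_pmf.prob M Y * c = (\<integral>x. indicator Y x * c \<partial>M)" by simp
  also have "\<dots> \<le> (\<integral>x. measure_pmf.prob (K x) X \<partial>M)"
    apply (rule integral_mono)
    using integrable_prob[of M K X 1] integrable_ind[of M Y c] apply simp_all
    using assms by (auto simp: indicator_def)
  finally show ?thesis by (simp add: prob_bind)
qed

lemma bind_upper:
  assumes "\<And>x. x \<in> Y \<Longrightarrow> measure_pmf.prob (K x) X \<le> c" "\<And>x. x \<notin> Y \<Longrightarrow> measure_pmf.prob (K x) X = 0"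
  shows "measure_pmf.prob (bind_pmf M K) X \<le> measure_pmf.prob M Y * c"
proof -
  have "(\<integral>x. measure_pmf.prob (K x) X \<partial>M) \<le> (\<integral>x. indicator Y x * c \<partial>M)"
    apply (rule integral_mono)
    using integrable_prob[of M K X 1] integrable_ind[of M Y c] apply simp_all
    using assms by (auto simp: indicator_def)
  also have "\<dots> = measure_pmf.prob M Y * c" by simp
  finally show ?thesis by (simp add: prob_bind)
qed

definition phi :: "event \<Rightarrow> nat \<Rightarrow> nat" where
  "phi evt = (\<lambda>j. if j \<in> fst evt then snd evt j else j)"

primrec anc :: "event pmf \<Rightarrow> nat \<Rightarrow> (nat \<Rightarrow> nat) pmf" where
  "anc p 0 = return_pmf id"
| "anc p (Suc n) = bind_pmf (anc p n) (\<lambda>A. map_pmf (\<lambda>e. A \<circ> phi e) p)"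

lemma apply_event_phi: "apply_event e s = s \<circ> phi e"
  by (auto simp: apply_event_def phi_def fun_eq_iff)

lemma dist_after_anc: "dist_after p n s = map_pmf (\<lambda>A. s \<circ> A) (anc p n)"
  by (induction n) (simp_all add: map_bind_pmf bind_map_pmf chain_step_def apply_event_phi map_pmf_comp comp_def)

lemma anc_add: "anc p (m + n) = bind_pmf (anc p m) (\<lambda>A. map_pmf (\<lambda>B. A \<circ> B) (anc p n))"
  by (induction n) (simp_all add: map_bind_pmf bind_map_pmf bind_assoc_pmf map_pmf_comp comp_def bind_return_pmf')

definition comp_evs :: "event list \<Rightarrow> nat \<Rightarrow> nat" where
  "comp_evs evs = foldl (\<lambda>A e. A \<circ> phi e) id evs"

lemma foldl_comp: "foldl (\<lambda>A e. A \<circ> phi e) (B :: nat \<Rightarrow> nat) evs = B \<circ> foldl (\<lambda>A e. A \<circ> phi e) id evs"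
proof (induction evs arbitrary: B)
  case Nil then show ?case by simp
next
  case (Cons e evs)
  have 1: "foldl (\<lambda>A e. A \<circ> phi e) B (e # evs) = (B \<circ> phi e) \<circ> foldl (\<lambda>A e. A \<circ> phi e) id evs"
    unfolding foldl_Cons by (rule Cons.IH)
  have 2: "foldl (\<lambda>A e. A \<circ> phi e) id (e # evs) = phi e \<circ> foldl (\<lambda>A e. A \<circ> phi e) id evs"
    unfolding foldl_Cons id_comp using Cons.IH by blast
  show ?case unfolding 1 2 by (simp only: o_assoc)
qed

lemma comp_evs_Cons: "comp_evs (e # evs) = phi e \<circ> comp_evs evs"
  unfolding comp_evs_def foldl_Cons id_comp by (rule foldl_comp)

lemma fold_apply: "fold apply_event evs s = s \<circ> comp_evs evs"
proof (induction evs arbitrary: s)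
  case Nil then show ?case by (simp add: comp_evs_def)
next
  case (Cons e evs)
  have "fold apply_event (e # evs) s = apply_event e s \<circ> comp_evs evs" using Cons.IH by (simp add: comp_def)
  then show ?case unfolding comp_evs_Cons apply_event_phi[of e s] by (simp only: o_assoc)
qed

lemma anc_comp_evs: "measure_pmf.prob (anc p (length evs)) {comp_evs evs} \<ge> prod_list (map (pmf p) evs)"
proof (induction evs rule: rev_induct)
  case Nil then show ?case by (simp add: comp_evs_def id_def)
next
  case (snoc e evs)
  have "measure_pmf.prob (anc p (length evs)) {comp_evs evs} * pmf p e
     \<le> measure_pmf.prob (anc p (Suc (length evs))) {comp_evs (evs @ [e])}"
    unfolding anc.simps
  proof (rule bind_lower)
    fix A assume "A \<in> {comp_evs evs}"
    then have "{e} \<subseteq> (\<lambda>e. A \<circ> phi e) -` {comp_evs (evs @ [e])}"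
      by (auto simp: comp_evs_def)
    then have "measure_pmf.prob p {e} \<le> measure_pmf.prob p ((\<lambda>e. A \<circ> phi e) -` {comp_evs (evs @ [e])})"
      by (rule measure_pmf.finite_measure_mono) simp
    then show "pmf p e \<le> measure_pmf.prob (map_pmf (\<lambda>e. A \<circ> phi e) p) {comp_evs (evs @ [e])}"
      by (simp only: measure_map_pmf measure_pmf_single[symmetric])
  qed simp
  moreover have "prod_list (map (pmf p) evs) * pmf p e \<le> measure_pmf.prob (anc p (length evs)) {comp_evs evs} * pmf p e"
    using snoc by (simp add: mult_right_mono)
  ultimately show ?case by simp
qed

lemma prob_one: "set_pmf p \<subseteq> X \<Longrightarrow> measure_pmf.prob p X = 1"
proof -
  assume "set_pmf p \<subseteq> X"
  then have "X \<inter> set_pmf p = UNIV \<inter> set_pmf p" by auto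
  then have "measure_pmf.prob p X = measure_pmf.prob p UNIV" by (metis measure_Int_set_pmf)
  then show ?thesis using measure_pmf.prob_space[of p] by simp
qed

lemma prob_compl': "measure_pmf.prob p (- X) = 1 - measure_pmf.prob p X"
  using measure_pmf.prob_compl[of X p] by (simp add: Compl_eq_Diff_UNIV)

definition CC :: "nat \<Rightarrow> nat \<Rightarrow> (nat \<Rightarrow> nat) set" where
  "CC N i = {A. \<forall>j\<in>sites N. A j = i}"

definition Cst :: "nat \<Rightarrow> (nat \<Rightarrow> nat) set" where
  "Cst N = {A. \<forall>j\<in>sites N. \<forall>k\<in>sites N. A j = A k}"

lemma phi_sites: "replacement_rule N p \<Longrightarrow> e \<in> set_pmf p \<Longrightarrow> j \<in> sites N \<Longrightarrow> phi e j \<in> sites N"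
  by (auto simp: replacement_rule_def valid_event_def phi_def)

lemma anc_sites: "replacement_rule N p \<Longrightarrow> A \<in> set_pmf (anc p n) \<Longrightarrow> j \<in> sites N \<Longrightarrow> A j \<in> sites N"
proof (induction n arbitrary: A j)
  case 0 then show ?case by simp
next
  case (Suc n)
  from Suc.prems(2) obtain B e where B: "B \<in> set_pmf (anc p n)" and e: "e \<in> set_pmf p" and A: "A = B \<circ> phi e" by auto
  have "phi e j \<in> sites N" by (rule phi_sites[OF Suc.prems(1) e Suc.prems(3)])
  then have "B (phi e j) \<in> sites N" by (rule Suc.IH[OF Suc.prems(1) B])
  then show ?case by (simp add: A)
qed

lemma P_eq: "measure_pmf.prob (dist_after p n (single_mutant i)) (all_mutant N) = measure_pmf.prob (anc p n) (CC N i)"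
proof -
  have "(\<lambda>A. single_mutant i \<circ> A) -` all_mutant N = CC N i"
    by (auto simp: all_mutant_def CC_def single_mutant_def split: if_splits)
  then show ?thesis by (simp add: dist_after_anc)
qed

lemma P_mono: assumes "replacement_rule N p"
  shows "measure_pmf.prob (anc p n) (CC N i) \<le> measure_pmf.prob (anc p (Suc n)) (CC N i)"
proof -
  have "measure_pmf.prob (anc p n) (CC N i) * 1 \<le> measure_pmf.prob (anc p (Suc n)) (CC N i)"
    unfolding anc.simps
  proof (rule bind_lower)
    fix A assume A: "A \<in> CC N i"
    have "set_pmf p \<subseteq> (\<lambda>e. A \<circ> phi e) -` CC N i"
      using A phi_sites[OF assms] by (auto simp: CC_def)
    then show "1 \<le> measure_pmf.prob (map_pmf (\<lambda>e. A \<circ> phi e) p) (CC N i)"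
      by (simp add: prob_one)
  qed simp
  then show ?thesis by simp
qed

lemma Cst_comp: "A \<in> Cst N \<Longrightarrow> (\<And>j. j \<in> sites N \<Longrightarrow> B j \<in> sites N) \<Longrightarrow> A \<circ> B \<in> Cst N"
proof -
  assume a: "A \<in> Cst N" and b: "\<And>j. j \<in> sites N \<Longrightarrow> B j \<in> sites N"
  from a have a': "\<forall>j\<in>sites N. \<forall>k\<in>sites N. A j = A k" by (simp only: Cst_def mem_Collect_eq)
  show ?thesis unfolding Cst_def mem_Collect_eq comp_apply
  proof (intro ballI)
    fix j k assume "j \<in> sites N" "k \<in> sites N"
    then show "A (B j) = A (B k)" using a' b by blast
  qed
qed

lemma f_mono: assumes "replacement_rule N p"
  shows "measure_pmf.prob (anc p (Suc n)) (- Cst N) \<le> measure_pmf.prob (anc p n) (- Cst N)"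
proof -
  have "measure_pmf.prob (anc p (Suc n)) (- Cst N) \<le> measure_pmf.prob (anc p n) (- Cst N) * 1"
    unfolding anc.simps
  proof (rule bind_upper)
    fix A assume A: "A \<notin> - Cst N"
    have "A \<circ> phi e \<in> Cst N" if "e \<in> set_pmf p" for e
      using A phi_sites[OF assms that] by (intro Cst_comp) auto
    then have "set_pmf p \<inter> (\<lambda>e. A \<circ> phi e) -` (- Cst N) = {}"
      by blast
    then show "measure_pmf.prob (map_pmf (\<lambda>e. A \<circ> phi e) p) (- Cst N) = 0"
      by (simp add: measure_pmf_zero_iff)
  qed simp
  then show ?thesis by simp
qed

lemma ci_lemma: assumes "\<forall>s :: state. \<forall>j\<in>sites N. fold apply_event evs s j = s i" "j \<in> sites N"
  shows "comp_evs evs j = i"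
proof -
  have "fold apply_event evs (\<lambda>x. if x = i then Mut else Res) j = (\<lambda>x. if x = i then Mut else Res) i"
    using assms(1)[rule_format, OF assms(2), of "\<lambda>x. if x = i then Mut else Res"] .
  then have "(if comp_evs evs j = i then Mut else Res) = Mut"
    unfolding fold_apply o_apply by simp
  then show ?thesis by (cases "comp_evs evs j = i") simp_all
qed

lemma f_step: assumes "replacement_rule N p" and i: "i \<in> sites N"
  and fixs: "\<forall>s :: state. \<forall>j\<in>sites N. fold apply_event evs s j = s i"
  shows "measure_pmf.prob (anc p (n + length evs)) (- Cst N)
     \<le> measure_pmf.prob (anc p n) (- Cst N) * (1 - prod_list (map (pmf p) evs))"
  unfolding anc_add
proof (rule bind_upper)
  fix A assume A: "A \<notin> - Cst N"
  have "A \<circ> B \<in> Cst N" if "B \<in> set_pmf (anc p (length evs))" for B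
    using A anc_sites[OF assms(1) that] by (intro Cst_comp) auto
  then have "set_pmf (anc p (length evs)) \<inter> (\<lambda>B. A \<circ> B) -` (- Cst N) = {}"
    by blast
  then show "measure_pmf.prob (map_pmf (\<lambda>B. A \<circ> B) (anc p (length evs))) (- Cst N) = 0"
    by (simp add: measure_pmf_zero_iff)
next
  fix A assume A: "A \<in> - Cst N"
  have ci: "comp_evs evs j = i" if "j \<in> sites N" for j
    by (rule ci_lemma[OF fixs that])
  have "{comp_evs evs} \<subseteq> (\<lambda>B. A \<circ> B) -` Cst N"
    using ci by (simp add: Cst_def)
  then have "measure_pmf.prob (anc p (length evs)) {comp_evs evs} \<le> measure_pmf.prob (anc p (length evs)) ((\<lambda>B. A \<circ> B) -` Cst N)"
    by (rule measure_pmf.finite_measure_mono) simp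
  with anc_comp_evs[of p evs] have "prod_list (map (pmf p) evs) \<le> measure_pmf.prob (anc p (length evs)) ((\<lambda>B. A \<circ> B) -` Cst N)"
    by linarith
  then show "measure_pmf.prob (map_pmf (\<lambda>B. A \<circ> B) (anc p (length evs))) (- Cst N) \<le> 1 - prod_list (map (pmf p) evs)"
    unfolding measure_map_pmf vimage_Compl prob_compl' by linarith
qed

lemma prod_list_pos: "(\<And>x. x \<in> set xs \<Longrightarrow> (0::real) < x) \<Longrightarrow> 0 < prod_list xs"
  by (induction xs) auto

lemma f_geom: assumes rr: "replacement_rule N p" and i: "i \<in> sites N"
  and fixs: "\<forall>s :: state. \<forall>j\<in>sites N. fold apply_event evs s j = s i"
  and q1: "prod_list (map (pmf p) evs) \<le> 1"
  shows "measure_pmf.prob (anc p (k * length evs)) (- Cst N) \<le> (1 - prod_list (map (pmf p) evs)) ^ k"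
proof (induction k)
  case 0 then show ?case by simp
next
  case (Suc k)
  have "measure_pmf.prob (anc p (Suc k * length evs)) (- Cst N)
      = measure_pmf.prob (anc p (k * length evs + length evs)) (- Cst N)" by (simp add: add.commute)
  also have "\<dots> \<le> measure_pmf.prob (anc p (k * length evs)) (- Cst N) * (1 - prod_list (map (pmf p) evs))"
    by (rule f_step[OF rr i fixs])
  also have "\<dots> \<le> (1 - prod_list (map (pmf p) evs)) ^ k * (1 - prod_list (map (pmf p) evs))"
    using Suc.IH q1 by (intro mult_right_mono) auto
  finally show ?case by (simp add: mult.commute)
qed

lemma f_lim: assumes rr: "replacement_rule N p" and fa: "fixation_assumption N p"
  shows "(\<lambda>n. measure_pmf.prob (anc p n) (- Cst N)) \<longlonglongrightarrow> 0"
proof -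
  define f where "f n = measure_pmf.prob (anc p n) (- Cst N)" for n
  from fa obtain i evs where i: "i \<in> sites N" and pos: "\<forall>evt\<in>set evs. pmf p evt > 0"
    and fixs: "\<forall>s :: state. \<forall>j\<in>sites N. fold apply_event evs s j = s i"
    unfolding fixation_assumption_def by blast
  define q where "q = prod_list (map (pmf p) evs)"
  have q0: "0 < q" unfolding q_def using pos by (intro prod_list_pos) auto
  have q1: "q \<le> 1" unfolding q_def using anc_comp_evs[of p evs] measure_pmf.prob_le_1[of "anc p (length evs)" "{comp_evs evs}"]
    by linarith
  have dec: "decseq f" unfolding decseq_Suc_iff f_def using f_mono[OF rr] by blast
  have bdd: "bdd_below (range f)" unfolding f_def by (rule bdd_belowI[of _ 0]) auto
  have lim: "f \<longlonglongrightarrow> (INF n. f n)" by (rule LIMSEQ_decseq_INF[OF bdd dec])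
  define l where "l = (INF n. f n)"
  have le: "l \<le> f m" for m
    using LIMSEQ_le_const2[OF lim[folded l_def], of "f m"] dec by (auto simp: decseq_def)
  have "l \<le> (1 - q) ^ k" for k
    using le[of "k * length evs"] f_geom[OF rr i fixs, of k] q1 unfolding f_def q_def by auto
  moreover have "(\<lambda>k. (1 - q) ^ k) \<longlonglongrightarrow> 0"
    by (rule LIMSEQ_power_zero) (use q0 q1 in auto)
  ultimately have "l \<le> 0"
    using LIMSEQ_le_const[of "\<lambda>k. (1 - q) ^ k" 0 l] by auto
  moreover have "0 \<le> l"
    by (rule LIMSEQ_le_const[OF lim[folded l_def]]) (auto simp: f_def)
  ultimately have "l = 0" by simp
  with lim show ?thesis unfolding l_def f_def by simp
qed

lemma sum_CC: assumes rr: "replacement_rule N p" and ne: "sites N \<noteq> {}"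
  shows "(\<Sum>i\<in>sites N. measure_pmf.prob (anc p n) (CC N i)) = 1 - measure_pmf.prob (anc p n) (- Cst N)"
proof -
  obtain j0 where j0: "j0 \<in> sites N" using ne by blast
  have fin: "finite (sites N)" by (simp add: sites_def)
  have disj: "disjoint_family_on (CC N) (sites N)"
    unfolding disjoint_family_on_def CC_def using j0 by auto
  have "(\<Sum>i\<in>sites N. measure_pmf.prob (anc p n) (CC N i)) = measure_pmf.prob (anc p n) (\<Union>i\<in>sites N. CC N i)"
    by (rule measure_pmf.finite_measure_finite_Union[symmetric, OF fin _ disj]) auto
  also have "(\<Union>i\<in>sites N. CC N i) \<inter> set_pmf (anc p n) = Cst N \<inter> set_pmf (anc p n)"
  proof
    show "(\<Union>i\<in>sites N. CC N i) \<inter> set_pmf (anc p n) \<subseteq> Cst N \<inter> set_pmf (anc p n)"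
      by (auto simp: CC_def Cst_def)
    show "Cst N \<inter> set_pmf (anc p n) \<subseteq> (\<Union>i\<in>sites N. CC N i) \<inter> set_pmf (anc p n)"
    proof
      fix A assume A: "A \<in> Cst N \<inter> set_pmf (anc p n)"
      then have "A j0 \<in> sites N" using anc_sites[OF rr _ j0] by blast
      moreover have "A \<in> CC N (A j0)"
      proof -
        from A have a': "\<forall>j\<in>sites N. \<forall>k\<in>sites N. A j = A k" unfolding Cst_def mem_Collect_eq Int_iff by (rule conjunct1)
        then show ?thesis unfolding CC_def mem_Collect_eq using j0 by blast
      qed
      ultimately show "A \<in> (\<Union>i\<in>sites N. CC N i) \<inter> set_pmf (anc p n)" using A by blast
    qed
  qed
  then have "measure_pmf.prob (anc p n) (\<Union>i\<in>sites N. CC N i) = measure_pmf.prob (anc p n) (Cst N)"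
    by (metis measure_Int_set_pmf)
  also have "\<dots> = 1 - measure_pmf.prob (anc p n) (- Cst N)"
    by (simp add: prob_compl')
  finally show ?thesis .
qed

lemma sum_fix: assumes rr: "replacement_rule N p" and fa: "fixation_assumption N p"
  shows "(\<Sum>i\<in>sites N. fix_prob N p i) = 1"
proof -
  have ne: "sites N \<noteq> {}" using fa unfolding fixation_assumption_def by blast
  define P where "P i n = measure_pmf.prob (anc p n) (CC N i)" for i n
  have conv: "P i \<longlonglongrightarrow> fix_prob N p i" for i
  proof -
    have inc: "incseq (P i)" unfolding incseq_Suc_iff P_def using P_mono[OF rr] by blast
    have bdd: "bdd_above (range (P i))" unfolding P_def by (rule bdd_aboveI[of _ 1]) auto
    have l: "P i \<longlonglongrightarrow> (SUP n. P i n)" by (rule LIMSEQ_incseq_SUP[OF bdd inc])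
    have "fix_prob N p i = lim (P i)" unfolding fix_prob_def P_eq P_def ..
    also have "\<dots> = (SUP n. P i n)" using l by (rule limI)
    finally show ?thesis using l by simp
  qed
  have "(\<lambda>n. \<Sum>i\<in>sites N. P i n) \<longlonglongrightarrow> (\<Sum>i\<in>sites N. fix_prob N p i)"
    by (rule tendsto_sum) (use conv in auto)
  moreover have "(\<lambda>n. \<Sum>i\<in>sites N. P i n) \<longlonglongrightarrow> 1"
  proof -
    have "(\<lambda>n. 1 - measure_pmf.prob (anc p n) (- Cst N)) \<longlonglongrightarrow> 1 - 0"
      by (intro tendsto_diff tendsto_const f_lim[OF rr fa])
    then show ?thesis unfolding P_def sum_CC[OF rr ne] by simp
  qed
  ultimately show ?thesis using LIMSEQ_unique by blast
qed
theorem mainTheorem1: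
  fixes N :: nat and p :: "event pmf" and u :: real
  assumes "replacement_rule N p"
    and "fixation_assumption N p"
    and "total_birth N p > 0"
    and "u > 0"
    and "\<forall>i\<in>sites N. \<forall>j\<in>sites N. death_rate N p i = death_rate N p j"
  shows "overall_fix_prob N p = 1 / real N \<and> molecular_clock N p u = u"
proof -
  have ne: "sites N \<noteq> {}" using assms(2) unfolding fixation_assumption_def by blast
  then obtain k where k: "k \<in> sites N" by blast
  define d where "d = death_rate N p k"
  have dc: "death_rate N p i = d" if "i \<in> sites N" for i
    using assms(5) k that unfolding d_def by blast
  have card: "card (sites N) = N" by (simp add: sites_def)
  have N1: "N \<ge> 1" using k by (simp add: sites_def)
  have "total_birth N p = (\<Sum>j\<in>sites N. \<Sum>i\<in>sites N. e_rate p i j)"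
    unfolding total_birth_def by (rule sum.swap)
  also have "\<dots> = (\<Sum>j\<in>sites N. d)"
    by (rule sum.cong) (auto simp: dc[symmetric] death_rate_def)
  also have "\<dots> = real N * d" using card by simp
  finally have TB: "total_birth N p = real N * d" .
  with assms(3) have dpos: "d \<noteq> 0" by auto
  have "(\<Sum>i\<in>sites N. death_rate N p i * fix_prob N p i) = d * (\<Sum>i\<in>sites N. fix_prob N p i)"
    by (simp add: dc sum_distrib_left)
  also have "\<dots> = d" using sum_fix[OF assms(1,2)] by simp
  finally have S: "(\<Sum>i\<in>sites N. death_rate N p i * fix_prob N p i) = d" .
  have O: "overall_fix_prob N p = 1 / real N"
    unfolding overall_fix_prob_def TB S using dpos N1 by (simp add: field_simps)
  moreover have "molecular_clock N p u = u"
    unfolding molecular_clock_def O using N1 by simp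
  ultimately show ?thesis by blast
qed

end
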